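(* Let $X$ be a $T_1$ topological space. (i) For every $\alpha\in X$, the maximal ideal $M_\alpha=\{f\in C_c(X)_F: f(\alpha)=0\}$ is generated by the idempotent $1-\chi_{\{\alpha\}}$. (ii) Every prime ideal of $C_c(X)_F$ which is not maximal is an essential ideal.
   Context: $C_c(X)_F$ denotes the set of all functions $f:X\to\mathbb{R}$ whose range is countable and whose set of points of discontinuity is finite; it is a commutative ring with unity under pointwise operations. $\chi_{\{\alpha\}}$ is the function equal to $1$ at $\alpha$ and $0$ elsewhere. An ideal is essential if it meets every nonzero ideal nontrivially. *)

theory Defs
  imports "HOL-Analysis.Analysis" "HOL-Algebra.Ideal"
begin

text \<open>The topological space X is the (T1) type 'a; functions X -> R are of type 'a => real.
  C_c(X)_F: countable range and finitely many points of discontinuity.\<close>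
definition CcF :: "('a::topological_space \<Rightarrow> real) set" where
  "CcF = {f. countable (range f) \<and> finite {x. \<not> (f \<longlongrightarrow> f x) (at x)}}"

definition CcF_ring :: "('a::topological_space \<Rightarrow> real) ring" where
  "CcF_ring = \<lparr>carrier = CcF, monoid.mult = (\<lambda>f g x. f x * g x), one = (\<lambda>x. 1),
      zero = (\<lambda>x. 0), add = (\<lambda>f g x. f x + g x)\<rparr>"

definition chi_singleton :: "'a \<Rightarrow> 'a \<Rightarrow> real" where
  "chi_singleton a = (\<lambda>x. if x = a then 1 else 0)"

definition essential_ideal :: "('b, 'm) ring_scheme \<Rightarrow> 'b set \<Rightarrow> bool" where
  "essential_ideal R I \<longleftrightarrow> ideal I R \<and>
     (\<forall>J. ideal J R \<and> J \<noteq> {\<zero>\<^bsub>R\<^esub>} \<longrightarrow> I \<inter> J \<noteq> {\<zero>\<^bsub>R\<^esub>})"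

end

theory Submission
  imports Defs
begin

lemma CcF_const: "(\<lambda>x. c) \<in> CcF"
  unfolding CcF_def by (auto simp: image_def)

lemma CcF_bin:
  fixes h :: "real \<Rightarrow> real \<Rightarrow> real" and f g :: "'a::topological_space \<Rightarrow> real"
  assumes f: "f \<in> CcF" and g: "g \<in> CcF"
    and hc: "\<And>(F::'a filter) u v a b. (u \<longlongrightarrow> a) F \<Longrightarrow> (v \<longlongrightarrow> b) F \<Longrightarrow> ((\<lambda>x. h (u x) (v x)) \<longlongrightarrow> h a b) F"
  shows "(\<lambda>x. h (f x) (g x)) \<in> CcF"
proof -
  have sub: "range (\<lambda>x. h (f x) (g x)) \<subseteq> (\<lambda>(a,b). h a b) ` (range f \<times> range g)" by auto
  have cf: "countable (range f)" and cg: "countable (range g)" using f g unfolding CcF_def by auto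
  have "countable (range f \<times> range g)" using cf cg by (rule countable_SIGMA)
  hence "countable ((\<lambda>(a,b). h a b) ` (range f \<times> range g))" by (rule countable_image)
  hence c: "countable (range (\<lambda>x. h (f x) (g x)))" using sub by (rule countable_subset[rotated])
  have "{x. \<not> ((\<lambda>x. h (f x) (g x)) \<longlongrightarrow> h (f x) (g x)) (at x)} \<subseteq>
        {x. \<not> (f \<longlongrightarrow> f x) (at x)} \<union> {x. \<not> (g \<longlongrightarrow> g x) (at x)}"
  proof (rule subsetI, rule ccontr)
    fix x assume x1: "x \<in> {x. \<not> ((\<lambda>x. h (f x) (g x)) \<longlongrightarrow> h (f x) (g x)) (at x)}"
      and x2: "x \<notin> {x. \<not> (f \<longlongrightarrow> f x) (at x)} \<union> {x. \<not> (g \<longlongrightarrow> g x) (at x)}"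
    from x2 have "(f \<longlongrightarrow> f x) (at x)" "(g \<longlongrightarrow> g x) (at x)" by auto
    from hc[OF this] x1 show False by simp
  qed
  moreover have "finite ({x. \<not> (f \<longlongrightarrow> f x) (at x)} \<union> {x. \<not> (g \<longlongrightarrow> g x) (at x)})"
    using f g unfolding CcF_def by simp
  ultimately have "finite {x. \<not> ((\<lambda>x. h (f x) (g x)) \<longlongrightarrow> h (f x) (g x)) (at x)}"
    by (rule finite_subset)
  with c show ?thesis unfolding CcF_def by simp
qed

lemma CcF_add: "f \<in> CcF \<Longrightarrow> g \<in> CcF \<Longrightarrow> (\<lambda>x. f x + g x) \<in> CcF"
  by (rule CcF_bin[where h="(+)"], assumption, assumption, rule tendsto_add)

lemma CcF_mult: "f \<in> CcF \<Longrightarrow> g \<in> CcF \<Longrightarrow> (\<lambda>x. f x * g x) \<in> CcF"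
  by (rule CcF_bin[where h="(*)"], assumption, assumption, rule tendsto_mult)

lemma CcF_uminus: "f \<in> CcF \<Longrightarrow> (\<lambda>x. - f x) \<in> CcF"
  using CcF_mult[OF CcF_const[of "-1"], of f] by simp

lemma CcF_cring: "cring (CcF_ring :: ('a::topological_space \<Rightarrow> real) ring)"
proof (rule cringI)
  show "abelian_group (CcF_ring :: ('a \<Rightarrow> real) ring)"
  proof (rule abelian_groupI)
    fix x assume "x \<in> carrier (CcF_ring :: ('a \<Rightarrow> real) ring)"
    hence x: "x \<in> CcF" by (simp add: CcF_ring_def)
    show "\<exists>y\<in>carrier (CcF_ring :: ('a \<Rightarrow> real) ring). y \<oplus>\<^bsub>CcF_ring\<^esub> x = \<zero>\<^bsub>CcF_ring\<^esub>"
      by (rule bexI[of _ "\<lambda>y. - x y"]) (simp_all add: CcF_ring_def CcF_uminus[OF x])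
  qed (simp_all add: CcF_ring_def CcF_add CcF_const add_ac)
  show "comm_monoid (CcF_ring :: ('a \<Rightarrow> real) ring)"
    by (rule comm_monoidI) (simp_all add: CcF_ring_def CcF_mult CcF_const mult_ac)
qed (simp add: CcF_ring_def distrib_right)

lemma chi_CcF: "(\<lambda>x. c * chi_singleton (a::'a::t1_space) x) \<in> CcF"
proof -
  have "range (\<lambda>x. c * chi_singleton a x) \<subseteq> {0, c}" by (auto simp: chi_singleton_def split: if_splits)
  hence r: "countable (range (\<lambda>x. c * chi_singleton a x))"
    by (rule countable_subset) simp
  have "{x. \<not> ((\<lambda>x. c * chi_singleton a x) \<longlongrightarrow> c * chi_singleton a x) (at x)} \<subseteq> {a}"
  proof (rule subsetI, rule ccontr)
    fix x assume x: "x \<in> {x. \<not> ((\<lambda>x. c * chi_singleton a x) \<longlongrightarrow> c * chi_singleton a x) (at x)}" "x \<notin> {a}"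
    have "open (- {a})" by (rule open_Compl) simp
    hence "eventually (\<lambda>y. y \<in> - {a}) (at x)"
      using x(2) by (intro eventually_at_in_open') auto
    hence "eventually (\<lambda>y. c * chi_singleton a y = c * chi_singleton a x) (at x)"
      by (rule eventually_mono) (use x(2) in \<open>simp add: chi_singleton_def\<close>)
    hence "((\<lambda>x. c * chi_singleton a x) \<longlongrightarrow> c * chi_singleton a x) (at x)"
      by (rule tendsto_eventually)
    with x(1) show False by simp
  qed
  hence "finite {x. \<not> ((\<lambda>x. c * chi_singleton a x) \<longlongrightarrow> c * chi_singleton a x) (at x)}"
    by (rule finite_subset) simp
  with r show ?thesis unfolding CcF_def by simp
qed

theorem proposition3p18:
  fixes X_witness :: "'a::t1_space itself"
  shows "(\<forall>\<alpha>::'a. let M = {f \<in> CcF. f \<alpha> = 0}; e = (\<lambda>x. 1 - chi_singleton \<alpha> x) in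
            maximalideal M CcF_ring \<and> e \<in> CcF \<and>
            e \<otimes>\<^bsub>CcF_ring\<^esub> e = e \<and> M = genideal CcF_ring {e})
       \<and> (\<forall>P :: ('a \<Rightarrow> real) set. primeideal P CcF_ring \<and> \<not> maximalideal P CcF_ring
            \<longrightarrow> essential_ideal CcF_ring P)"
proof -
  interpret R: cring "CcF_ring :: ('a \<Rightarrow> real) ring" by (rule CcF_cring)
  have carr: "carrier (CcF_ring :: ('a \<Rightarrow> real) ring) = CcF" by (simp add: CcF_ring_def)
  have mult: "f \<otimes>\<^bsub>(CcF_ring :: ('a \<Rightarrow> real) ring)\<^esub> g = (\<lambda>x. f x * g x)" for f g
    by (simp add: CcF_ring_def)
  have addr: "f \<oplus>\<^bsub>(CcF_ring :: ('a \<Rightarrow> real) ring)\<^esub> g = (\<lambda>x. f x + g x)" for f g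
    by (simp add: CcF_ring_def)
  have zero: "\<zero>\<^bsub>(CcF_ring :: ('a \<Rightarrow> real) ring)\<^esub> = (\<lambda>x. 0)" by (simp add: CcF_ring_def)
  have one: "\<one>\<^bsub>(CcF_ring :: ('a \<Rightarrow> real) ring)\<^esub> = (\<lambda>x. 1)" by (simp add: CcF_ring_def)
  define e where "e = (\<lambda>(\<alpha>::'a) x. 1 - chi_singleton \<alpha> x)"
  have e_in: "e \<alpha> \<in> CcF" for \<alpha> :: 'a
  proof -
    have "(\<lambda>x. 1 + (-1) * chi_singleton \<alpha> x) \<in> CcF"
      by (rule CcF_add[OF CcF_const chi_CcF])
    moreover have "(\<lambda>x. 1 + (-1) * chi_singleton \<alpha> x) = e \<alpha>" by (auto simp: e_def)
    ultimately show ?thesis by simp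
  qed
  have chi_in: "chi_singleton \<alpha> \<in> CcF" for \<alpha> :: 'a
    using chi_CcF[of 1 \<alpha>] by simp
  have M_eq: "{f \<in> CcF. f \<alpha> = 0} = PIdl\<^bsub>CcF_ring\<^esub> (e \<alpha>)" for \<alpha> :: 'a
  proof
    show "{f \<in> CcF. f \<alpha> = 0} \<subseteq> PIdl\<^bsub>CcF_ring\<^esub> (e \<alpha>)"
    proof
      fix f assume f: "f \<in> {f \<in> CcF. f \<alpha> = 0}"
      have "f = f \<otimes>\<^bsub>CcF_ring\<^esub> e \<alpha>"
        using f by (auto simp: mult e_def chi_singleton_def)
      with f show "f \<in> PIdl\<^bsub>CcF_ring\<^esub> (e \<alpha>)" unfolding cgenideal_def carr by blast
    qed
    show "PIdl\<^bsub>CcF_ring\<^esub> (e \<alpha>) \<subseteq> {f \<in> CcF. f \<alpha> = 0}"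
      unfolding cgenideal_def carr mult
      using CcF_mult e_in by (auto simp: e_def chi_singleton_def)
  qed
  have maxM: "maximalideal {f \<in> CcF. f \<alpha> = 0} CcF_ring" for \<alpha> :: 'a
  proof (rule maximalidealI)
    show idM: "ideal {f \<in> CcF. f \<alpha> = 0} CcF_ring"
    proof -
      have "ideal (PIdl\<^bsub>CcF_ring\<^esub> (e \<alpha>)) CcF_ring" by (rule R.cgenideal_ideal) (simp add: carr e_in)
      thus ?thesis using M_eq[of \<alpha>] by simp
    qed
    show "carrier CcF_ring \<noteq> {f \<in> CcF. f \<alpha> = 0}"
      using CcF_const[of 1] carr by auto
    fix J assume J: "ideal J CcF_ring" "{f \<in> CcF. f \<alpha> = 0} \<subseteq> J" "J \<subseteq> carrier CcF_ring"
    show "J = {f \<in> CcF. f \<alpha> = 0} \<or> J = carrier CcF_ring"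
    proof (cases "J = {f \<in> CcF. f \<alpha> = 0}")
      case False
      then obtain g where g: "g \<in> J" "g \<alpha> \<noteq> 0" using J carr by auto
      have gC: "g \<in> CcF" using g J carr by auto
      define h where "h = (\<lambda>x. (1 / g \<alpha>) * g x)"
      have hJ: "h \<in> J"
        using ideal.I_l_closed[OF J(1) g(1), of "\<lambda>x. 1 / g \<alpha>"] CcF_const[of "1 / g \<alpha>"] carr
        by (simp add: mult h_def)
      have hC: "h \<in> CcF" unfolding h_def by (rule CcF_mult[OF CcF_const gC])
      have kC: "(\<lambda>x. 1 + - h x) \<in> CcF" by (rule CcF_add[OF CcF_const CcF_uminus[OF hC]])
      have kJ: "(\<lambda>x. 1 + - h x) \<in> J" using kC J(2) g(2) by (auto simp: h_def)
      have "h \<oplus>\<^bsub>CcF_ring\<^esub> (\<lambda>x. 1 + - h x) \<in> J"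
        using J(1) hJ kJ by (simp add: ideal_def additive_subgroup.a_closed)
      hence "\<one>\<^bsub>CcF_ring\<^esub> \<in> J" by (simp add: addr one)
      hence "J = carrier CcF_ring" by (rule ideal.one_imp_carrier[OF J(1)])
      thus ?thesis by simp
    qed simp
  qed
  have part1: "\<forall>\<alpha>::'a. let M = {f \<in> CcF. f \<alpha> = 0}; e = (\<lambda>x. 1 - chi_singleton \<alpha> x) in
            maximalideal M CcF_ring \<and> e \<in> CcF \<and>
            e \<otimes>\<^bsub>CcF_ring\<^esub> e = e \<and> M = genideal CcF_ring {e}"
  proof (intro allI)
    fix \<alpha> :: 'a
    have "e \<alpha> \<otimes>\<^bsub>CcF_ring\<^esub> e \<alpha> = e \<alpha>" by (auto simp: mult e_def chi_singleton_def)
    moreover have "{f \<in> CcF. f \<alpha> = 0} = genideal CcF_ring {e \<alpha>}"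
      using M_eq[of \<alpha>] R.cgenideal_eq_genideal[of "e \<alpha>"] e_in carr by simp
    ultimately show "let M = {f \<in> CcF. f \<alpha> = 0}; e = (\<lambda>x. 1 - chi_singleton \<alpha> x) in
            maximalideal M CcF_ring \<and> e \<in> CcF \<and>
            e \<otimes>\<^bsub>CcF_ring\<^esub> e = e \<and> M = genideal CcF_ring {e}"
      using maxM[of \<alpha>] e_in[of \<alpha>] unfolding Let_def e_def by simp
  qed
  have part2: "\<forall>P :: ('a \<Rightarrow> real) set. primeideal P CcF_ring \<and> \<not> maximalideal P CcF_ring
            \<longrightarrow> essential_ideal CcF_ring P"
  proof (intro allI impI)
    fix P :: "('a \<Rightarrow> real) set"
    assume A: "primeideal P CcF_ring \<and> \<not> maximalideal P CcF_ring"
    hence pr: "primeideal P CcF_ring" and nm: "\<not> maximalideal P CcF_ring" by auto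
    have idP: "ideal P CcF_ring" using pr by (simp add: primeideal_def)
    have chiP: "chi_singleton \<alpha> \<in> P" for \<alpha> :: 'a
    proof (rule ccontr)
      assume nc: "chi_singleton \<alpha> \<notin> P"
      have "chi_singleton \<alpha> \<otimes>\<^bsub>CcF_ring\<^esub> e \<alpha> = \<zero>\<^bsub>CcF_ring\<^esub>"
        by (auto simp: mult zero e_def chi_singleton_def)
      hence "chi_singleton \<alpha> \<otimes>\<^bsub>CcF_ring\<^esub> e \<alpha> \<in> P" using additive_subgroup.zero_closed[OF ideal.axioms(1)[OF idP]] by simp
      hence "e \<alpha> \<in> P"
        using primeideal.I_prime[OF pr, of "chi_singleton \<alpha>" "e \<alpha>"] chi_in e_in carr nc by auto
      hence sub: "{f \<in> CcF. f \<alpha> = 0} \<subseteq> P"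
        unfolding M_eq by (rule R.cgenideal_minimal[OF idP])
      have "P \<subseteq> carrier CcF_ring" by (rule additive_subgroup.a_subset[OF ideal.axioms(1)[OF idP]])
      from maximalideal.I_maximal[OF maxM idP sub this]
      have "P = {f \<in> CcF. f \<alpha> = 0} \<or> P = carrier CcF_ring" .
      moreover have "carrier CcF_ring \<noteq> P" by (rule primeideal.I_notcarr[OF pr])
      ultimately have "P = {f \<in> CcF. f \<alpha> = 0}" by auto
      with maxM nm show False by simp
    qed
    show "essential_ideal CcF_ring P"
      unfolding essential_ideal_def
    proof (intro conjI allI impI idP)
      fix J :: "('a \<Rightarrow> real) set" assume J: "ideal J CcF_ring \<and> J \<noteq> {\<zero>\<^bsub>CcF_ring\<^esub>}"
      have idJ: "ideal J CcF_ring" using J by simp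
      have ne: "J \<noteq> {\<zero>\<^bsub>CcF_ring\<^esub>}" using J by simp
      have z: "\<zero>\<^bsub>CcF_ring\<^esub> \<in> J" by (rule additive_subgroup.zero_closed[OF ideal.axioms(1)[OF idJ]])
      obtain g where g: "g \<in> J" "g \<noteq> \<zero>\<^bsub>CcF_ring\<^esub>" using z ne by blast
      have "g \<noteq> (\<lambda>x. 0)" using g(2) zero by simp
      then obtain \<alpha> where a: "g \<alpha> \<noteq> 0" by (auto simp: fun_eq_iff)
      have gC: "g \<in> carrier CcF_ring" by (rule ideal.Icarr[OF idJ g(1)])
      have h1: "g \<otimes>\<^bsub>CcF_ring\<^esub> chi_singleton \<alpha> \<in> P"
        using ideal.I_l_closed[OF idP chiP gC] .
      have h2: "g \<otimes>\<^bsub>CcF_ring\<^esub> chi_singleton \<alpha> \<in> J"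
        using ideal.I_r_closed[OF idJ g(1), of "chi_singleton \<alpha>"] chi_in carr by simp
      have h3: "g \<otimes>\<^bsub>CcF_ring\<^esub> chi_singleton \<alpha> \<noteq> \<zero>\<^bsub>CcF_ring\<^esub>"
      proof
        assume "g \<otimes>\<^bsub>CcF_ring\<^esub> chi_singleton \<alpha> = \<zero>\<^bsub>CcF_ring\<^esub>"
        hence "(\<lambda>x. g x * chi_singleton \<alpha> x) = (\<lambda>x. 0)" by (simp add: mult zero)
        hence "g \<alpha> * chi_singleton \<alpha> \<alpha> = 0" by (drule_tac x=\<alpha> in fun_cong) simp
        thus False using a by (simp add: chi_singleton_def)
      qed
      show "P \<inter> J \<noteq> {\<zero>\<^bsub>CcF_ring\<^esub>}" using h1 h2 h3 by blast
    qed
  qed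
  show ?thesis by (rule conjI[OF part1 part2])
qed

end
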